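(* Let $\mathcal{A}=\{a_1,a_2,\ldots\}$ be a countably infinite set. Let $X$ be a discrete random variable taking values in $\{a_1,\ldots,a_m\}$ for some $m\in\mathbb{N}$, and let $Y$ be a discrete random variable taking values in $\mathcal{A}$. Assume that for some $\eta_1,\eta_2,\eta_3>0$ with $\eta_3\le\eta_2\le\eta_1<1$, $$\eta_2\le d_{\mathrm{TV}}(X,Y)\le\eta_1,\qquad d_{\mathrm{loc}}(X,Y)\le\eta_3.$$ Let $M$ be an integer such that $$\sum_{i=M}^\infty P_Y(a_i)\le\eta_3,\qquad M\ge\max\Bigl\{m+1,\ \frac{\eta_2}{(1-\eta_1)\eta_3}\Bigr\},$$ and let $\eta_4>0$ satisfy $-\sum_{i=M}^\infty P_Y(a_i)\log P_Y(a_i)\le\eta_4$. Then $$|H(X)-H(Y)|\le\eta_1\log\Bigl(\frac{M\eta_3}{\eta_2}-1\Bigr)+h(\eta_1)+\eta_4.$$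
   Context: For discrete random variables $X,Y$ on a set $\mathcal{A}$ with probability mass functions $P_X,P_Y$, the local distance is $d_{\mathrm{loc}}(X,Y) = \sup_{u\in\mathcal{A}} |P_X(u)-P_Y(u)|$ and the total variation distance is $d_{\mathrm{TV}}(X,Y) = \frac12\sum_{u\in\mathcal{A}}|P_X(u)-P_Y(u)|$. All logarithms are natural and entropies are in nats, with $0\log0=0$. $h(x) = -x\log x-(1-x)\log(1-x)$ denotes the binary entropy function. *)

theory Defs
  imports "HOL-Probability.Probability"
begin

text \<open>The countably infinite alphabet a_1, a_2, ... is represented by its index set
  {1..} of natural numbers; random variables are represented by their distributions
  (probability mass functions).\<close>

definition shannon_entropy :: "'a pmf \<Rightarrow> real" where
  "shannon_entropy p = (\<Sum>\<^sub>\<infinity>x. - pmf p x * ln (pmf p x))"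

definition d_TV :: "'a pmf \<Rightarrow> 'a pmf \<Rightarrow> real" where
  "d_TV p q = (1/2) * (\<Sum>\<^sub>\<infinity>x. \<bar>pmf p x - pmf q x\<bar>)"

definition d_loc :: "'a pmf \<Rightarrow> 'a pmf \<Rightarrow> real" where
  "d_loc p q = (SUP x. \<bar>pmf p x - pmf q x\<bar>)"

definition bin_entropy :: "real \<Rightarrow> real" where
  "bin_entropy x = - x * ln x - (1 - x) * ln (1 - x)"

end

theory Submission imports Defs begin

lemma pmf_summable_on: "pmf p summable_on A"
proof -
  have "Infinite_Set_Sum.abs_summable_on (pmf p) A" by (rule pmf_abs_summable)
  hence "Infinite_Sum.abs_summable_on (pmf p) A" using abs_summable_equivalent by blast
  thus ?thesis by (rule abs_summable_summable)
qed

lemma pmf_infsum_UNIV: "infsum (pmf p) UNIV = 1"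
  using infsetsum_pmf_eq_1[of p UNIV] infsetsum_infsum[OF pmf_abs_summable, of p UNIV] by simp

lemma L1: fixes a t :: real assumes "0 \<le> a" "0 < t"
  shows "- a * ln a \<le> a * ln (1/t) + t - a"
proof (cases "a = 0")
  case True then show ?thesis using assms by simp
next
  case False
  hence a: "a > 0" using assms by simp
  have "ln (t/a) \<le> t/a - 1" using ln_le_minus_one a assms by simp
  hence "a * ln (t/a) \<le> a * (t/a - 1)" using a by (simp add: mult_left_mono)
  moreover have "a * (t/a - 1) = t - a" using a by (simp add: field_simps)
  moreover have "ln (t/a) = ln t - ln a" using a assms by (simp add: ln_div)
  moreover have "ln (1/t) = - ln t" using assms by (simp add: ln_div)
  ultimately show ?thesis by (simp add: algebra_simps)
qed

lemma P1: fixes a b :: real assumes "0 \<le> a" "0 \<le> b"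
  shows "- (a+b) * ln (a+b) \<le> - a * ln a - b * ln b"
proof -
  have "a * ln a \<le> a * ln (a+b)"
  proof (cases "a = 0")
    case False thus ?thesis using assms by (intro mult_left_mono) auto
  qed simp
  moreover have "b * ln b \<le> b * ln (a+b)"
  proof (cases "b = 0")
    case False thus ?thesis using assms by (intro mult_left_mono) auto
  qed simp
  ultimately show ?thesis by (simp add: algebra_simps)
qed

lemma P2: fixes a b l :: real assumes "0 \<le> a" "0 \<le> b" "0 < l" "l < 1"
  shows "- a * ln a - b * ln b + a * ln (1-l) + b * ln l \<le> - (a+b) * ln (a+b)"
proof (cases "a + b = 0")
  case True hence "a = 0" "b = 0" using assms by auto
  thus ?thesis by simp
next
  case False
  hence s: "a + b > 0" using assms by simp
  have 1: "- a * ln a \<le> a * ln (1/((1-l)*(a+b))) + (1-l)*(a+b) - a"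
    using L1[of a "(1-l)*(a+b)"] assms s by simp
  have 2: "- b * ln b \<le> b * ln (1/(l*(a+b))) + l*(a+b) - b"
    using L1[of b "l*(a+b)"] assms s by simp
  have e1: "ln (1/((1-l)*(a+b))) = - ln (1-l) - ln (a+b)" using assms s by (simp add: ln_div ln_mult)
  have e2: "ln (1/(l*(a+b))) = - ln l - ln (a+b)" using assms s by (simp add: ln_div ln_mult)
  show ?thesis using 1 2 unfolding e1 e2 by (simp add: algebra_simps)
qed

lemma G: fixes a :: "nat \<Rightarrow> real" and t :: real assumes "finite S" "\<And>i. i \<in> S \<Longrightarrow> 0 \<le> a i" "0 < t"
  shows "(\<Sum>i\<in>S. - a i * ln (a i)) \<le> (\<Sum>i\<in>S. a i) * ln (1/t) + real (card S) * t - (\<Sum>i\<in>S. a i)"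
proof -
  have "(\<Sum>i\<in>S. - a i * ln (a i)) \<le> (\<Sum>i\<in>S. a i * ln (1/t) + t - a i)"
    using L1 assms by (intro sum_mono) auto
  also have "\<dots> = (\<Sum>i\<in>S. a i) * ln (1/t) + real (card S) * t - (\<Sum>i\<in>S. a i)"
    by (simp add: sum.distrib sum_subtractf sum_distrib_right)
  finally show ?thesis .
qed


theorem theorem5:
  fixes X Y :: "nat pmf" and m M :: nat and \<eta>1 \<eta>2 \<eta>3 \<eta>4 :: real
  assumes X_vals: "set_pmf X \<subseteq> {1..m}"
    and Y_vals: "set_pmf Y \<subseteq> {1..}"
    and eta_pos: "0 < \<eta>3" "\<eta>3 \<le> \<eta>2" "\<eta>2 \<le> \<eta>1" "\<eta>1 < 1"
    and tv: "\<eta>2 \<le> d_TV X Y" "d_TV X Y \<le> \<eta>1"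
    and loc: "d_loc X Y \<le> \<eta>3"
    and tail: "(\<Sum>\<^sub>\<infinity>i\<in>{M..}. pmf Y i) \<le> \<eta>3"
    and M_ge: "M \<ge> m + 1" "real M \<ge> \<eta>2 / ((1 - \<eta>1) * \<eta>3)"
    and eta4_pos: "0 < \<eta>4"
    and tail_ent_summable: "(\<lambda>i. - pmf Y i * ln (pmf Y i)) summable_on {M..}"
    and tail_ent: "(\<Sum>\<^sub>\<infinity>i\<in>{M..}. - pmf Y i * ln (pmf Y i)) \<le> \<eta>4"
  shows "\<bar>shannon_entropy X - shannon_entropy Y\<bar>
           \<le> \<eta>1 * ln (real M * \<eta>3 / \<eta>2 - 1) + bin_entropy \<eta>1 + \<eta>4"
proof -
  define p where "p = pmf X"
  define q where "q = pmf Y"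
  define F where "F = {..<M}"
  define z where "z i = max (p i - q i) 0" for i
  define w where "w i = max (q i - p i) 0" for i
  define c where "c i = min (p i) (q i)" for i
  define \<delta> where "\<delta> = d_TV X Y"
  define T where "T = infsum q {M..}"
  define E where "E = infsum (\<lambda>i. - q i * ln (q i)) {M..}"
  define f where "f x = - x * ln x" for x :: real
  have finF: "finite F" unfolding F_def by simp
  have p0: "0 \<le> p i" for i unfolding p_def by simp
  have q0: "0 \<le> q i" for i unfolding q_def by simp
  have p1: "p i \<le> 1" for i unfolding p_def by (rule pmf_le_1)
  have q1: "q i \<le> 1" for i unfolding q_def by (rule pmf_le_1)
  have pout: "p i = 0" if "i \<notin> {1..m}" for i
    using X_vals that unfolding p_def by (meson set_pmf_iff subsetD)
  have q00: "q 0 = 0" using Y_vals unfolding q_def by (meson atLeast_iff not_one_le_zero set_pmf_iff subsetD)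
  have pM: "p i = 0" if "i \<ge> M" for i using pout that M_ge(1) by auto
  have FM: "F \<union> {M..} = UNIV" "F \<inter> {M..} = {}" unfolding F_def by auto
  have sumFp: "sum p F = 1" unfolding p_def
    by (rule sum_pmf_eq_1[OF finF]) (use X_vals M_ge(1) in \<open>auto simp: F_def\<close>)
  have qsum: "q summable_on A" for A unfolding q_def by (rule pmf_summable_on)
  have sumFq: "sum q F + T = 1"
  proof -
    have "infsum q UNIV = infsum q F + infsum q {M..}"
      using infsum_Un_disjoint[OF qsum qsum FM(2)] FM(1) by simp
    thus ?thesis using pmf_infsum_UNIV[of Y] finF unfolding q_def T_def by simp
  qed
  have T0: "0 \<le> T" unfolding T_def by (rule infsum_nonneg) (use q0 in auto)
  have tvsum: "2 * \<delta> = sum (\<lambda>i. \<bar>p i - q i\<bar>) F + T"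
  proof -
    have s2: "(\<lambda>i. \<bar>p i - q i\<bar>) summable_on {M..}"
      using qsum[of "{M..}"] by (rule summable_on_cong[THEN iffD1, rotated]) (simp add: pM q0)
    have e2: "infsum (\<lambda>i. \<bar>p i - q i\<bar>) {M..} = T"
      unfolding T_def by (rule infsum_cong) (simp add: pM q0)
    have "infsum (\<lambda>i. \<bar>p i - q i\<bar>) UNIV = infsum (\<lambda>i. \<bar>p i - q i\<bar>) F + infsum (\<lambda>i. \<bar>p i - q i\<bar>) {M..}"
      using infsum_Un_disjoint[OF summable_on_finite[OF finF] s2 FM(2)] FM(1) by simp
    thus ?thesis using e2 finF unfolding \<delta>_def d_TV_def p_def q_def by simp
  qed
  have locp: "\<bar>p i - q i\<bar> \<le> \<eta>3" for i
  proof -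
    have "bdd_above (range (\<lambda>x. \<bar>pmf X x - pmf Y x\<bar>))"
    proof (rule bdd_aboveI[of _ 1])
      fix x assume "x \<in> range (\<lambda>x. \<bar>pmf X x - pmf Y x\<bar>)"
      then obtain j where xj: "x = \<bar>pmf X j - pmf Y j\<bar>" by auto
      have "0 \<le> pmf X j" "0 \<le> pmf Y j" by simp_all
      thus "x \<le> 1" unfolding xj abs_le_iff using pmf_le_1[of X j] pmf_le_1[of Y j] by linarith
    qed
    hence "\<bar>p i - q i\<bar> \<le> d_loc X Y" unfolding d_loc_def p_def q_def by (rule cSUP_upper[rotated]) simp
    thus ?thesis using loc by simp
  qed
  have dpos: "0 < \<delta>" "\<delta> < 1" "\<eta>2 \<le> \<delta>" "\<delta> \<le> \<eta>1" using eta_pos tv unfolding \<delta>_def by auto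
  have z0: "0 \<le> z i" "0 \<le> w i" for i unfolding z_def w_def by auto
  have zle: "z i \<le> \<eta>3" "w i \<le> \<eta>3" for i using locp[of i] unfolding z_def w_def by auto
  have pcz: "p i = c i + z i" "q i = c i + w i" "\<bar>p i - q i\<bar> = z i + w i" "p i - q i = z i - w i"
    "0 \<le> c i" for i
    unfolding c_def z_def w_def using p0[of i] q0[of i] by auto
  have sz: "sum z F = \<delta>" and sw: "sum w F = \<delta> - T"
  proof -
    have a: "sum z F + sum w F = 2 * \<delta> - T" using tvsum by (simp add: pcz(3) sum.distrib)
    have b: "sum z F - sum w F = T" using sumFp sumFq
      by (simp add: sum_subtractf[symmetric] pcz(4)[symmetric] sum_subtractf)
    from a b show "sum z F = \<delta>" "sum w F = \<delta> - T" by linarith+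
  qed
  have sc: "sum c F = 1 - \<delta>" using sumFp sz by (simp add: pcz(1) sum.distrib)
  have HX: "shannon_entropy X = (\<Sum>i\<in>F. f (p i))"
  proof -
    have "shannon_entropy X = infsum (\<lambda>i. f (p i)) F"
      unfolding shannon_entropy_def f_def p_def
      by (rule infsum_cong_neutral) (use pM in \<open>auto simp: F_def p_def\<close>)
    thus ?thesis using finF by simp
  qed
  have HY: "shannon_entropy Y = (\<Sum>i\<in>F. f (q i)) + E"
  proof -
    have "shannon_entropy Y = infsum (\<lambda>i. f (q i)) F + infsum (\<lambda>i. f (q i)) {M..}"
      unfolding shannon_entropy_def f_def q_def
      using infsum_Un_disjoint[OF summable_on_finite[OF finF] tail_ent_summable FM(2)] FM(1) by simp
    thus ?thesis using finF unfolding E_def f_def by simp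
  qed
  have Elow: "T * ln (1/\<eta>3) \<le> E"
  proof -
    have "infsum (\<lambda>i. q i * ln (1/\<eta>3)) {M..} \<le> E" unfolding E_def
    proof (rule infsum_mono)
      show "(\<lambda>i. q i * ln (1/\<eta>3)) summable_on {M..}" by (rule summable_on_cmult_left[OF qsum])
      show "(\<lambda>i. - q i * ln (q i)) summable_on {M..}" using tail_ent_summable unfolding q_def .
      fix i :: nat assume "i \<in> {M..}"
      hence qi: "q i \<le> \<eta>3" using locp[of i] pM[of i] q0[of i] by auto
      show "q i * ln (1/\<eta>3) \<le> - q i * ln (q i)"
      proof (cases "q i = 0")
        case False
        hence "ln (q i) \<le> ln \<eta>3" using qi q0[of i] eta_pos by simp
        thus ?thesis using q0[of i] eta_pos by (simp add: ln_div mult_left_mono)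
      qed simp
    qed
    moreover have "infsum (\<lambda>i. q i * ln (1/\<eta>3)) {M..} = T * ln (1/\<eta>3)"
      unfolding T_def by (rule infsum_cmult_left) (rule qsum)
    ultimately show ?thesis by simp
  qed
  define Sz where "Sz = {i\<in>F. z i > 0}"
  define Sw where "Sw = {i\<in>F. w i > 0}"
  define s where "s = real (card Sz)"
  define N where "N = real (card Sw)"
  have finS: "finite Sz" "finite Sw" unfolding Sz_def Sw_def using finF by auto
  have sN: "s + N \<le> real M - 1"
  proof -
    have disj: "Sz \<inter> Sw = {}" unfolding Sz_def Sw_def z_def w_def by auto
    have sub: "Sz \<union> Sw \<subseteq> F - {0}" unfolding Sz_def Sw_def z_def w_def
      using pout[of 0] q00 by auto
    have "card Sz + card Sw = card (Sz \<union> Sw)" using card_Un_disjoint[OF finS disj] by simp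
    also have "\<dots> \<le> card (F - {0})" using sub finF by (intro card_mono) auto
    also have "\<dots> = M - 1" using M_ge(1) unfolding F_def by (simp add: card_Diff_singleton)
    finally have "card Sz + card Sw \<le> M - 1" .
    thus ?thesis unfolding s_def N_def using M_ge(1) by linarith
  qed
  have zS: "sum z F = sum z Sz" "sum (\<lambda>i. f (z i)) F = sum (\<lambda>i. f (z i)) Sz"
    using z0 finF unfolding Sz_def f_def by (auto intro!: sum.mono_neutral_right simp: less_le)
  have wS: "sum w F = sum w Sw" "sum (\<lambda>i. f (w i)) F = sum (\<lambda>i. f (w i)) Sw"
    using z0 finF unfolding Sw_def f_def by (auto intro!: sum.mono_neutral_right simp: less_le)
  have ds: "\<delta> \<le> s * \<eta>3"
  proof -
    have "sum z Sz \<le> sum (\<lambda>_. \<eta>3) Sz" using zle by (intro sum_mono) auto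
    thus ?thesis using sz zS unfolding s_def by simp
  qed
  have dN: "\<delta> - T \<le> N * \<eta>3"
  proof -
    have "sum w Sw \<le> sum (\<lambda>_. \<eta>3) Sw" using zle by (intro sum_mono) auto
    thus ?thesis using sw wS unfolding N_def by simp
  qed
  have spos: "0 < s" using ds dpos eta_pos by (smt (verit) mult_nonpos_nonneg of_nat_0_le_iff s_def)
  have flow: "x * ln (1/\<eta>3) \<le> f x" if "0 \<le> x" "x \<le> \<eta>3" for x
  proof (cases "x = 0")
    case False
    hence "ln x \<le> ln \<eta>3" using that eta_pos by simp
    thus ?thesis using that eta_pos unfolding f_def by (simp add: ln_div mult_left_mono)
  qed (simp add: f_def)
  have zlow: "\<delta> * ln (1/\<eta>3) \<le> sum (\<lambda>i. f (z i)) F"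
  proof -
    have "sum (\<lambda>i. z i * ln (1/\<eta>3)) F \<le> sum (\<lambda>i. f (z i)) F"
      using flow z0 zle by (intro sum_mono) auto
    thus ?thesis using sz by (simp add: sum_distrib_right[symmetric])
  qed
  have wlow: "(\<delta> - T) * ln (1/\<eta>3) \<le> sum (\<lambda>i. f (w i)) F"
  proof -
    have "sum (\<lambda>i. w i * ln (1/\<eta>3)) F \<le> sum (\<lambda>i. f (w i)) F"
      using flow z0 zle by (intro sum_mono) auto
    thus ?thesis using sw by (simp add: sum_distrib_right[symmetric])
  qed
  have zup: "sum (\<lambda>i. f (z i)) F \<le> \<delta> * ln (s/\<delta>)"
  proof -
    have "sum (\<lambda>i. f (z i)) Sz \<le> (\<Sum>i\<in>Sz. z i) * ln (1/(\<delta>/s)) + s * (\<delta>/s) - (\<Sum>i\<in>Sz. z i)"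
      using G[OF finS(1), of z "\<delta>/s"] z0 spos dpos unfolding f_def s_def by simp
    thus ?thesis using zS sz spos by simp
  qed
  have wup: "sum (\<lambda>i. f (w i)) F \<le> \<delta> * ln ((N+1)/\<delta>)"
  proof -
    have Np: "0 < N + 1" unfolding N_def by simp
    define Lg where "Lg = ln ((N+1)/\<delta>)"
    have ll: "ln (1/(\<delta>/(N+1))) = Lg" unfolding Lg_def by simp
    have A: "sum (\<lambda>i. f (w i)) Sw \<le> (\<delta> - T) * Lg + N * (\<delta>/(N+1)) - (\<delta> - T)"
      using G[OF finS(2), of w "\<delta>/(N+1)", folded N_def] z0 Np dpos sw wS unfolding f_def ll by simp
    have B: "f T \<le> T * Lg + \<delta>/(N+1) - T"
      using L1[of T "\<delta>/(N+1)"] T0 Np dpos unfolding f_def ll by simp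
    have C: "0 \<le> f T"
    proof -
      have "T \<le> 1" using tail eta_pos unfolding T_def q_def by simp
      thus ?thesis using T0 unfolding f_def by (cases "T = 0") (simp_all add: mult_nonneg_nonpos)
    qed
    have D: "N * (\<delta>/(N+1)) + \<delta>/(N+1) = \<delta>"
    proof -
      have "N * (\<delta>/(N+1)) + \<delta>/(N+1) = (N+1) * (\<delta>/(N+1))" by (simp only: distrib_right mult_1_left)
      also have "\<dots> = \<delta>" using Np by simp
      finally show ?thesis .
    qed
    have Ee: "(\<delta> - T) * Lg + T * Lg = \<delta> * Lg" by (simp add: algebra_simps)
    have "sum (\<lambda>i. f (w i)) Sw \<le> \<delta> * Lg" using A B C D Ee by linarith
    thus ?thesis using wS unfolding Lg_def by simp
  qed
  have lnd: "ln \<delta> \<le> 0" using dpos by simp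
  have mixA: "(\<Sum>i\<in>F. f (q i)) - (\<Sum>i\<in>F. f (p i)) \<le> sum (\<lambda>i. f (w i)) F - sum (\<lambda>i. f (z i)) F + bin_entropy \<delta>"
  proof -
    have "(\<Sum>i\<in>F. f (q i) - f (p i)) \<le> (\<Sum>i\<in>F. f (w i) - f (z i) - c i * ln (1-\<delta>) - z i * ln \<delta>)"
    proof (rule sum_mono)
      fix i
      have "f (q i) \<le> f (c i) + f (w i)" using P1[of "c i" "w i"] pcz z0 unfolding f_def by simp
      moreover have "f (c i) + f (z i) + c i * ln (1-\<delta>) + z i * ln \<delta> \<le> f (p i)"
        using P2[of "c i" "z i" \<delta>] pcz z0 dpos unfolding f_def by simp
      ultimately show "f (q i) - f (p i) \<le> f (w i) - f (z i) - c i * ln (1-\<delta>) - z i * ln \<delta>" by linarith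
    qed
    also have "\<dots> = sum (\<lambda>i. f (w i)) F - sum (\<lambda>i. f (z i)) F - sum c F * ln (1-\<delta>) - sum z F * ln \<delta>"
      by (simp add: sum_subtractf sum_distrib_right)
    finally show ?thesis using sc sz unfolding bin_entropy_def by (simp add: sum_subtractf)
  qed
  have mixB: "(\<Sum>i\<in>F. f (p i)) - (\<Sum>i\<in>F. f (q i)) \<le> sum (\<lambda>i. f (z i)) F - sum (\<lambda>i. f (w i)) F + bin_entropy \<delta>"
  proof -
    have "(\<Sum>i\<in>F. f (p i) - f (q i)) \<le> (\<Sum>i\<in>F. f (z i) - f (w i) - c i * ln (1-\<delta>) - w i * ln \<delta>)"
    proof (rule sum_mono)
      fix i
      have "f (p i) \<le> f (c i) + f (z i)" using P1[of "c i" "z i"] pcz z0 unfolding f_def by simp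
      moreover have "f (c i) + f (w i) + c i * ln (1-\<delta>) + w i * ln \<delta> \<le> f (q i)"
        using P2[of "c i" "w i" \<delta>] pcz z0 dpos unfolding f_def by simp
      ultimately show "f (p i) - f (q i) \<le> f (z i) - f (w i) - c i * ln (1-\<delta>) - w i * ln \<delta>" by linarith
    qed
    also have "\<dots> = sum (\<lambda>i. f (z i)) F - sum (\<lambda>i. f (w i)) F - sum c F * ln (1-\<delta>) - sum w F * ln \<delta>"
      by (simp add: sum_subtractf sum_distrib_right)
    also have "\<dots> \<le> sum (\<lambda>i. f (z i)) F - sum (\<lambda>i. f (w i)) F + bin_entropy \<delta>"
    proof -
      have "T * ln \<delta> \<le> 0" using T0 lnd by (simp add: mult_nonneg_nonpos)
      hence "\<delta> * ln \<delta> \<le> (\<delta> - T) * ln \<delta>" by (simp add: algebra_simps)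
      thus ?thesis using sc sw unfolding bin_entropy_def by simp
    qed
    finally show ?thesis by (simp add: sum_subtractf)
  qed
  define K0 where "K0 = real M * \<eta>3 / \<delta> - 1"
  define K1 where "K1 = real M * \<eta>3 / \<eta>2 - 1"
  have Np: "0 < N + 1" unfolding N_def by simp
  have R1: "(N+1) * \<eta>3 / \<delta> \<le> K0"
  proof -
    have "(s + N + 1) * \<eta>3 \<le> real M * \<eta>3" using sN eta_pos by (intro mult_right_mono) auto
    hence "(N+1) * \<eta>3 + s * \<eta>3 \<le> real M * \<eta>3" by (simp add: algebra_simps)
    hence "(N+1) * \<eta>3 + \<delta> \<le> real M * \<eta>3" using ds by linarith
    then have "((N+1) * \<eta>3 + \<delta>) / \<delta> \<le> real M * \<eta>3 / \<delta>" using dpos by (intro divide_right_mono) auto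
    moreover have "((N+1) * \<eta>3 + \<delta>) / \<delta> = (N+1) * \<eta>3 / \<delta> + 1" using dpos by (simp add: add_divide_distrib)
    ultimately show ?thesis unfolding K0_def by linarith
  qed
  have R2: "s * \<eta>3 / \<delta> \<le> K0"
  proof -
    have Tle: "T \<le> \<eta>3" using tail unfolding T_def q_def .
    have "(s + N + 1) * \<eta>3 \<le> real M * \<eta>3" using sN eta_pos by (intro mult_right_mono) auto
    hence "s * \<eta>3 + N * \<eta>3 + \<eta>3 \<le> real M * \<eta>3" by (simp add: algebra_simps)
    hence "s * \<eta>3 + \<delta> \<le> real M * \<eta>3" using dN Tle by linarith
    hence "(s * \<eta>3 + \<delta>) / \<delta> \<le> real M * \<eta>3 / \<delta>" using dpos by (intro divide_right_mono) auto
    moreover have "(s * \<eta>3 + \<delta>) / \<delta> = s * \<eta>3 / \<delta> + 1" using dpos by (simp add: add_divide_distrib)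
    ultimately show ?thesis unfolding K0_def by linarith
  qed
  have P1pos: "0 < (N+1) * \<eta>3 / \<delta>" using Np eta_pos dpos by simp
  have P2pos: "0 < s * \<eta>3 / \<delta>" using spos eta_pos dpos by simp
  have K0pos: "0 < K0" using R1 P1pos by linarith
  have li: "ln (1/\<eta>3) = - ln \<eta>3" using eta_pos by (simp add: ln_div)
  have dirA: "shannon_entropy Y - shannon_entropy X \<le> \<delta> * ln K0 + bin_entropy \<delta> + \<eta>4"
  proof -
    have e: "\<delta> * ln ((N+1)/\<delta>) - \<delta> * ln (1/\<eta>3) = \<delta> * ln ((N+1) * \<eta>3 / \<delta>)"
    proof -
      have h1: "ln ((N+1) * \<eta>3 / \<delta>) = ln (N+1) + ln \<eta>3 - ln \<delta>"
        using Np eta_pos dpos by (simp add: ln_div ln_mult)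
      have h2: "ln ((N+1) / \<delta>) = ln (N+1) - ln \<delta>" using Np dpos by (simp add: ln_div)
      show ?thesis unfolding h1 h2 li by (simp add: algebra_simps)
    qed
    have "\<delta> * ln ((N+1) * \<eta>3 / \<delta>) \<le> \<delta> * ln K0"
      using R1 P1pos dpos by (intro mult_left_mono) auto
    thus ?thesis using HX HY mixA wup zlow tail_ent e unfolding E_def q_def by linarith
  qed
  have dirB: "shannon_entropy X - shannon_entropy Y \<le> \<delta> * ln K0 + bin_entropy \<delta>"
  proof -
    have e: "\<delta> * ln (s/\<delta>) - (\<delta> - T) * ln (1/\<eta>3) - T * ln (1/\<eta>3) = \<delta> * ln (s * \<eta>3 / \<delta>)"
    proof -
      have h1: "ln (s * \<eta>3 / \<delta>) = ln s + ln \<eta>3 - ln \<delta>"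
        using spos eta_pos dpos by (simp add: ln_div ln_mult)
      have h2: "ln (s / \<delta>) = ln s - ln \<delta>" using spos dpos by (simp add: ln_div)
      show ?thesis unfolding h1 h2 li by (simp add: algebra_simps)
    qed
    have "\<delta> * ln (s * \<eta>3 / \<delta>) \<le> \<delta> * ln K0"
      using R2 P2pos dpos by (intro mult_left_mono) auto
    thus ?thesis using HX HY mixB zup wlow Elow e by linarith
  qed
  have fin: "\<delta> * ln K0 + bin_entropy \<delta> \<le> \<eta>1 * ln K1 + bin_entropy \<eta>1"
  proof -
    have K01: "K0 \<le> K1" unfolding K0_def K1_def using dpos eta_pos
      by (intro diff_right_mono divide_left_mono) auto
    have a: "\<delta> * ln K0 \<le> \<delta> * ln K1" using K01 K0pos dpos by (intro mult_left_mono) auto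
    have KK: "1 \<le> (K1 + 1) * (1 - \<eta>1)"
    proof -
      have "\<eta>2 / ((1 - \<eta>1) * \<eta>3) \<le> real M" by (rule M_ge(2))
      hence "\<eta>2 \<le> real M * ((1 - \<eta>1) * \<eta>3)" using eta_pos by (simp add: field_simps)
      thus ?thesis unfolding K1_def using eta_pos by (simp add: field_simps)
    qed
    have K1pos: "0 < K1" using K01 K0pos by linarith
    have b1: "- \<delta> * ln \<delta> \<le> \<delta> * ln (1/\<eta>1) + \<eta>1 - \<delta>" using L1[of \<delta> \<eta>1] dpos eta_pos by simp
    have b2: "- (1-\<delta>) * ln (1-\<delta>) \<le> (1-\<delta>) * ln (1/(1-\<eta>1)) + (1-\<eta>1) - (1-\<delta>)"
      using L1[of "1-\<delta>" "1-\<eta>1"] dpos eta_pos by simp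
    have c: "ln \<eta>1 \<le> ln K1 + ln (1-\<eta>1)"
    proof -
      have "\<eta>1 \<le> K1 * (1-\<eta>1)" using KK by (simp add: algebra_simps)
      hence "ln \<eta>1 \<le> ln (K1 * (1-\<eta>1))" using eta_pos dpos by (subst ln_le_cancel_iff) auto
      thus ?thesis using K1pos eta_pos by (simp add: ln_mult)
    qed
    have d: "(\<eta>1 - \<delta>) * ln \<eta>1 \<le> (\<eta>1 - \<delta>) * (ln K1 + ln (1-\<eta>1))"
      using c dpos by (intro mult_left_mono) auto
    have l1: "ln (1/\<eta>1) = - ln \<eta>1" "ln (1/(1-\<eta>1)) = - ln (1-\<eta>1)" using eta_pos dpos by (simp_all add: ln_div)
    show ?thesis using a b1 b2 d unfolding bin_entropy_def l1 by (simp add: algebra_simps)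
  qed
  show ?thesis using dirA dirB fin eta4_pos unfolding K1_def[symmetric] by linarith
qed

end
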